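(* Every fractal gasket $K$ satisfies the sharp separation condition: there is a constant $C'>0$ such that for every $k\ge1$ and all $I,J\in\Sigma^k$ with $\varphi_I(K)\cap\varphi_J(K)=\emptyset$, $$\operatorname{dist}(\varphi_I(K),\varphi_J(K))\ge C'\min\{\operatorname{diam}\varphi_I(K),\operatorname{diam}\varphi_J(K)\}.$$
   Context: Let $\Delta\subset\mathbb R^2$ be the triangle with vertices $(0,0)$, $(1,0)$, $(1/2,\sqrt3/2)$. A fractal gasket is the attractor $K$ (the nonempty compact set with $K=\bigcup_j\varphi_j(K)$) of $\{\varphi_j(z)=r_j(z+d_j)\}_{j=1}^N$, $r_j\in(0,1)$, $d_j\in\mathbb R^2$, such that $\bigcup_j\varphi_j(\Delta)\subset\Delta$ and, for $i\ne j$, $\varphi_i(\Delta)$ and $\varphi_j(\Delta)$ intersect only at common vertices. $\Sigma=\{1,\dots,N\}$; for $I=i_1\cdots i_k\in\Sigma^k$, $\varphi_I=\varphi_{i_1}\circ\cdots\circ\varphi_{i_k}$. $\operatorname{dist}(A,B)=\min\{\|a-b\|:a\in A,b\in B\}$. *)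

theory Defs
  imports "HOL-Analysis.Analysis"
begin

text \<open>The plane R^2 is modelled by the complex numbers.\<close>

definition tri_vertices :: "complex set" where
  "tri_vertices = {0, 1, Complex (1/2) (sqrt 3 / 2)}"

definition Delta :: "complex set" where
  "Delta = convex hull tri_vertices"

definition sim_map :: "(nat \<Rightarrow> real) \<Rightarrow> (nat \<Rightarrow> complex) \<Rightarrow> nat \<Rightarrow> complex \<Rightarrow> complex" where
  "sim_map r d j z = complex_of_real (r j) * (z + d j)"

definition word_map :: "(nat \<Rightarrow> real) \<Rightarrow> (nat \<Rightarrow> complex) \<Rightarrow> nat list \<Rightarrow> complex \<Rightarrow> complex" where
  "word_map r d I = foldr (\<lambda>i f. sim_map r d i \<circ> f) I id"

definition fractal_gasket :: "nat \<Rightarrow> (nat \<Rightarrow> real) \<Rightarrow> (nat \<Rightarrow> complex) \<Rightarrow> complex set \<Rightarrow> bool" where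
  "fractal_gasket N r d K \<longleftrightarrow>
     (\<forall>j\<in>{1..N}. 0 < r j \<and> r j < 1) \<and>
     (\<Union>j\<in>{1..N}. sim_map r d j ` Delta) \<subseteq> Delta \<and>
     (\<forall>i\<in>{1..N}. \<forall>j\<in>{1..N}. i \<noteq> j \<longrightarrow>
        sim_map r d i ` Delta \<inter> sim_map r d j ` Delta
          \<subseteq> sim_map r d i ` tri_vertices \<inter> sim_map r d j ` tri_vertices) \<and>
     K \<noteq> {} \<and> compact K \<and> K = (\<Union>j\<in>{1..N}. sim_map r d j ` K)"

end

theory Submission
  imports Defs
begin


definition vtx :: "nat \<Rightarrow> complex" where
  "vtx a = (if a = 1 then 1 else if a = 2 then Complex (1/2) (sqrt 3 / 2) else 0)"

definition bc :: "nat \<Rightarrow> complex \<Rightarrow> real" where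
  "bc a z = (if a = 1 then Re z - Im z / sqrt 3 else if a = 2 then 2 * Im z / sqrt 3
             else 1 - Re z - Im z / sqrt 3)"

lemma s3: "sqrt 3 * sqrt 3 = (3::real)" "sqrt 3 > 0" by auto

lemma tri_vertices_vtx: "tri_vertices = vtx ` {..<3}"
proof -
  have "{..<3::nat} = {0,1,2}" by auto
  then show ?thesis by (auto simp: tri_vertices_def vtx_def)
qed

lemma bc_sum: "bc 0 z + bc 1 z + bc 2 z = 1"
  by (simp add: bc_def field_simps)

lemma bc_decomp: "z = of_real (bc 1 z) + of_real (bc 2 z) * vtx 2"
  using s3 by (simp add: bc_def vtx_def complex_eq_iff field_simps)

lemma bc_vtx: "a < 3 \<Longrightarrow> c < 3 \<Longrightarrow> bc a (vtx c) = (if a = c then 1 else 0)"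
  using s3 by (auto simp: bc_def vtx_def field_simps less_Suc_eq numeral_3_eq_3)

lemma Delta_bc: "Delta = {z. \<forall>a<3. 0 \<le> bc a z}"
proof -
  have "Delta = convex hull {0, 1, vtx 2}" by (simp add: Delta_def tri_vertices_def vtx_def)
  also have "\<dots> = {u *\<^sub>R 0 + v *\<^sub>R 1 + w *\<^sub>R vtx 2 | u v w. 0 \<le> u \<and> 0 \<le> v \<and> 0 \<le> w \<and> u + v + w = 1}"
    by (rule convex_hull_3)
  also have "\<dots> = {z. \<forall>a<3. 0 \<le> bc a z}"
  proof (intro set_eqI iffI)
    fix z assume "z \<in> {u *\<^sub>R 0 + v *\<^sub>R 1 + w *\<^sub>R vtx 2 | u v w. 0 \<le> u \<and> 0 \<le> v \<and> 0 \<le> w \<and> u + v + w = 1}"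
    then obtain u v w where h: "0 \<le> u" "0 \<le> v" "0 \<le> w" "u + v + w = 1" "z = v *\<^sub>R 1 + w *\<^sub>R vtx 2" by auto
    have "bc 1 z = v" "bc 2 z = w" using s3 h(5) by (auto simp: bc_def vtx_def scaleR_conv_of_real field_simps)
    moreover have "bc 0 z = u" using bc_sum[of z] h(4) calculation by linarith
    ultimately have "0 \<le> bc 0 z" "0 \<le> bc 1 z" "0 \<le> bc 2 z" using h by auto
    moreover have "\<And>a::nat. a<3 \<Longrightarrow> a=0 \<or> a=1 \<or> a=2" by auto
    ultimately show "z \<in> {z. \<forall>a<3. 0 \<le> bc a z}" by auto
  next
    fix z assume "z \<in> {z. \<forall>a<3. 0 \<le> bc a z}"
    then have h: "0 \<le> bc 0 z" "0 \<le> bc 1 z" "0 \<le> bc 2 z" by auto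
    show "z \<in> {u *\<^sub>R 0 + v *\<^sub>R 1 + w *\<^sub>R vtx 2 | u v w. 0 \<le> u \<and> 0 \<le> v \<and> 0 \<le> w \<and> u + v + w = 1}"
      apply (rule CollectI)
      apply (rule exI[of _ "bc 0 z"], rule exI[of _ "bc 1 z"], rule exI[of _ "bc 2 z"])
      using h bc_sum[of z] bc_decomp[of z] by (simp add: scaleR_conv_of_real)
  qed
  finally show ?thesis .
qed

lemma norm_vtx: "norm (vtx 2) = 1" "norm (vtx 2 - 1) = 1"
  using s3 by (auto simp: vtx_def cmod_def power2_eq_square field_simps)

lemma bc_near: assumes "z \<in> Delta" "a < 3" shows "norm (z - vtx a) \<le> 1 - bc a z"
proof -
  have h: "0 \<le> bc 0 z" "0 \<le> bc 1 z" "0 \<le> bc 2 z" using assms(1) by (auto simp: Delta_bc)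
  have s: "bc 0 z + bc 1 z + bc 2 z = 1" by (rule bc_sum)
  have dz: "z = of_real (bc 1 z) + of_real (bc 2 z) * vtx 2" by (rule bc_decomp)
  have "a = 0 \<or> a = 1 \<or> a = 2" using assms(2) by auto
  then show ?thesis
  proof (elim disjE)
    assume a: "a = 0"
    have "norm z \<le> norm (of_real (bc 1 z) :: complex) + norm (of_real (bc 2 z) * vtx 2)"
      by (subst dz) (rule norm_triangle_ineq)
    also have "\<dots> = bc 1 z + bc 2 z" using h by (simp add: norm_mult norm_vtx)
    finally show ?thesis using a s by (simp add: vtx_def)
  next
    assume a: "a = 1"
    have b1: "(of_real (bc 1 z)::complex) = 1 - of_real (bc 0 z) - of_real (bc 2 z)"
      using s by (simp add: eq_diff_eq[symmetric])
    have "z - 1 = of_real (bc 2 z) * (vtx 2 - 1) - of_real (bc 0 z)"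
      by (subst dz, subst b1) (simp add: algebra_simps)
    then have "norm (z - 1) \<le> norm (of_real (bc 2 z) * (vtx 2 - 1)) + norm (of_real (bc 0 z) :: complex)"
      by (metis norm_triangle_ineq4)
    also have "\<dots> = bc 2 z + bc 0 z" using h by (simp add: norm_mult norm_vtx)
    finally show ?thesis using a s by (simp add: vtx_def)
  next
    assume a: "a = 2"
    have b2: "(of_real (bc 2 z)::complex) = 1 - of_real (bc 0 z) - of_real (bc 1 z)"
      using s by (simp add: eq_diff_eq[symmetric])
    have "z - vtx 2 = of_real (bc 1 z) * (1 - vtx 2) - of_real (bc 0 z) * vtx 2"
      by (subst dz, subst b2) (simp add: algebra_simps)
    then have "norm (z - vtx 2) \<le> norm (of_real (bc 1 z) * (1 - vtx 2)) + norm (of_real (bc 0 z) * vtx 2)"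
      by (metis norm_triangle_ineq4)
    also have "\<dots> = bc 1 z + bc 0 z" using h by (simp add: norm_mult norm_vtx norm_minus_commute[of 1])
    finally show ?thesis using a s by simp
  qed
qed

lemma bc_lip: "\<bar>bc a x - bc a y\<bar> \<le> 2 * norm (x - y)"
proof -
  have re: "\<bar>Re x - Re y\<bar> \<le> norm (x - y)" "\<bar>Im x - Im y\<bar> \<le> norm (x - y)"
    by (metis abs_Re_le_cmod minus_complex.simps(1), metis abs_Im_le_cmod minus_complex.simps(2))
  have i3: "\<bar>Im x / sqrt 3 - Im y / sqrt 3\<bar> \<le> norm (x - y)"
  proof -
    have "\<bar>Im x / sqrt 3 - Im y / sqrt 3\<bar> = \<bar>Im x - Im y\<bar> / sqrt 3" using s3 by (simp add: diff_divide_distrib[symmetric])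
    also have "\<dots> \<le> \<bar>Im x - Im y\<bar>" using s3 by (simp add: divide_le_eq) (smt (verit) real_sqrt_ge_one abs_ge_zero mult_le_cancel_left1)
    finally show ?thesis using re by linarith
  qed
  show ?thesis unfolding bc_def using re i3 by (auto simp: abs_if split: if_splits) 
qed

lemma bc_aff: "bc a (of_real t * z + c) - bc a (of_real t * w + c) = t * (bc a z - bc a w)"
  by (simp add: bc_def algebra_simps diff_divide_distrib add_divide_distrib)

lemma bc_sim: "bc a (sim_map r d j z) - bc a (sim_map r d j w) = r j * (bc a z - bc a w)"
  using bc_aff[of a "r j" z "of_real (r j) * d j" w] by (simp add: sim_map_def distrib_left)



fun rho :: "(nat \<Rightarrow> real) \<Rightarrow> nat list \<Rightarrow> real" where
  "rho r [] = 1" | "rho r (i#I) = r i * rho r I"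

lemma wm_Nil: "word_map r d [] = id" by (simp add: word_map_def)
lemma wm_Cons: "word_map r d (i#I) = sim_map r d i \<circ> word_map r d I" by (simp add: word_map_def)

lemma compact_Delta: "compact Delta"
  unfolding Delta_def tri_vertices_def by (intro compact_convex_hull finite_imp_compact) auto

lemma closed_Delta: "closed Delta" using compact_Delta compact_imp_closed by blast

lemma vtx_Delta: "a < 3 \<Longrightarrow> vtx a \<in> Delta"
  by (auto simp: Delta_bc bc_vtx)

locale gasket =
  fixes N :: nat and r :: "nat \<Rightarrow> real" and d :: "nat \<Rightarrow> complex" and K :: "complex set"
  assumes fg: "fractal_gasket N r d K"
begin

lemma rpos: "j \<in> {1..N} \<Longrightarrow> 0 < r j" using fg unfolding fractal_gasket_def by blast
lemma rlt1: "j \<in> {1..N} \<Longrightarrow> r j < 1" using fg unfolding fractal_gasket_def by blast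
lemma Tsub: "j \<in> {1..N} \<Longrightarrow> sim_map r d j ` Delta \<subseteq> Delta" using fg unfolding fractal_gasket_def by blast
lemma Tint: "i \<in> {1..N} \<Longrightarrow> j \<in> {1..N} \<Longrightarrow> i \<noteq> j \<Longrightarrow>
        sim_map r d i ` Delta \<inter> sim_map r d j ` Delta
          \<subseteq> sim_map r d i ` tri_vertices \<inter> sim_map r d j ` tri_vertices"
  using fg unfolding fractal_gasket_def by blast
lemma Kne: "K \<noteq> {}" using fg unfolding fractal_gasket_def by blast
lemma Kc: "compact K" using fg unfolding fractal_gasket_def by blast
lemma Kfix: "K = (\<Union>j\<in>{1..N}. sim_map r d j ` K)" using fg unfolding fractal_gasket_def by blast

lemma sim_diff: "sim_map r d j x - sim_map r d j y = of_real (r j) * (x - y)"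
  by (simp add: sim_map_def algebra_simps)

lemma sim_norm: "j \<in> {1..N} \<Longrightarrow> norm (sim_map r d j x - sim_map r d j y) = r j * norm (x - y)"
  using rpos[of j] by (simp add: sim_diff norm_mult)

lemma sim_inj: "j \<in> {1..N} \<Longrightarrow> inj (sim_map r d j)"
  using rpos[of j] by (intro injI) (simp add: sim_map_def)

lemma rho_pos: "set I \<subseteq> {1..N} \<Longrightarrow> 0 < rho r I \<and> rho r I \<le> 1"
proof (induction I)
  case Nil then show ?case by simp
next
  case (Cons i I)
  then have "i \<in> {1..N}" by auto
  have IH: "0 < rho r I" "rho r I \<le> 1" using Cons by auto
  have "r i * rho r I \<le> 1" using rpos[OF \<open>i \<in> {1..N}\<close>] rlt1[OF \<open>i \<in> {1..N}\<close>] IH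
    by (intro mult_le_one) auto
  then show ?case using IH rpos[OF \<open>i \<in> {1..N}\<close>] by simp
qed

lemma wm_norm: "set I \<subseteq> {1..N} \<Longrightarrow> norm (word_map r d I x - word_map r d I y) = rho r I * norm (x - y)"
proof (induction I)
  case Nil then show ?case by (simp add: wm_Nil)
next
  case (Cons i I)
  then have "i \<in> {1..N}" by auto
  have IH: "norm (word_map r d I x - word_map r d I y) = rho r I * norm (x - y)" using Cons by auto
  show ?case using IH sim_norm[OF \<open>i \<in> {1..N}\<close>] by (simp add: wm_Cons)
qed

lemma wm_Delta: "set I \<subseteq> {1..N} \<Longrightarrow> word_map r d I ` Delta \<subseteq> Delta"
proof (induction I)
  case Nil then show ?case by (simp add: wm_Nil)
next
  case (Cons i I)
  then have "i \<in> {1..N}" by auto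
  have IH: "word_map r d I ` Delta \<subseteq> Delta" using Cons by auto
  have e: "word_map r d (i#I) ` Delta = sim_map r d i ` (word_map r d I ` Delta)"
    by (simp only: wm_Cons image_comp)
  show ?case unfolding e using image_mono[OF IH, of "sim_map r d i"] Tsub[OF \<open>i \<in> {1..N}\<close>] by (rule order_trans)
qed

lemma K_Delta: "K \<subseteq> Delta"
proof -
  define f where "f x = infdist x Delta" for x
  have cf: "continuous_on K f" unfolding f_def by (intro continuous_on_infdist continuous_on_id)
  obtain x0 where x0: "x0 \<in> K" "\<forall>y\<in>K. f y \<le> f x0"
    using continuous_attains_sup[OF Kc Kne cf] by blast
  obtain j x1 where j: "j \<in> {1..N}" "x1 \<in> K" "x0 = sim_map r d j x1"
    using x0(1) Kfix by blast
  have Dne: "Delta \<noteq> {}" using vtx_Delta[of 0] by auto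
  obtain y1 where y1: "y1 \<in> Delta" "infdist x1 Delta = dist x1 y1"
    using infdist_attains_inf[OF closed_Delta Dne] by blast
  have "sim_map r d j y1 \<in> Delta" using Tsub[OF j(1)] y1(1) by blast
  then have "f x0 \<le> dist x0 (sim_map r d j y1)" unfolding f_def by (rule infdist_le)
  also have "\<dots> = r j * f x1" using y1(2) j(3) sim_norm[OF j(1)] by (simp add: f_def dist_norm)
  also have "\<dots> \<le> r j * f x0" using x0(2) j(2) rpos[OF j(1)] by simp
  finally have "(1 - r j) * f x0 \<le> 0" by (simp add: algebra_simps)
  then have "f x0 \<le> 0" using rlt1[OF j(1)] by (simp add: mult_le_0_iff)
  show ?thesis
  proof
    fix y assume "y \<in> K"
    then have "f y = 0" using x0(2) \<open>f x0 \<le> 0\<close> infdist_nonneg[of y Delta] by (force simp: f_def)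
    then show "y \<in> Delta" using in_closed_iff_infdist_zero[OF closed_Delta Dne] by (simp add: f_def)
  qed
qed

lemma wm_K: "set I \<subseteq> {1..N} \<Longrightarrow> word_map r d I ` K \<subseteq> Delta"
  using wm_Delta K_Delta by blast

lemma diam_wm: assumes "set I \<subseteq> {1..N}" shows "diameter (word_map r d I ` K) \<le> rho r I * diameter K"
proof (rule diameter_le)
  show "word_map r d I ` K \<noteq> {} \<or> 0 \<le> rho r I * diameter K" using Kne by auto
  fix x y assume "x \<in> word_map r d I ` K" "y \<in> word_map r d I ` K"
  then obtain x' y' where "x' \<in> K" "y' \<in> K" "x = word_map r d I x'" "y = word_map r d I y'" by auto
  moreover have "dist x' y' \<le> diameter K" using Kc compact_imp_bounded \<open>x' \<in> K\<close> \<open>y' \<in> K\<close> diameter_bounded_bound by blast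
  ultimately show "norm (x - y) \<le> rho r I * diameter K"
    using wm_norm[OF assms] rho_pos[OF assms] by (simp add: dist_norm)
qed

end


lemma bc_le1: assumes "z \<in> Delta" "a < 3" shows "bc a z \<le> 1"
proof -
  have h: "0 \<le> bc 0 z" "0 \<le> bc 1 z" "0 \<le> bc 2 z" using assms(1) by (auto simp: Delta_bc)
  have "a = 0 \<or> a = 1 \<or> a = 2" using assms(2) by auto
  then show ?thesis using h bc_sum[of z] by auto
qed

lemma finite_const:
  assumes "finite S" "\<And>s. s \<in> S \<Longrightarrow> \<exists>c>0. P c s"
    "\<And>c c' s. s \<in> S \<Longrightarrow> P c s \<Longrightarrow> 0 < c' \<Longrightarrow> c' \<le> c \<Longrightarrow> P c' s"
  shows "\<exists>c>0. \<forall>s\<in>S. P (c::real) s"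
  using assms
proof (induction S rule: finite_induct)
  case empty then show ?case by (auto intro: exI[of _ 1])
next
  case (insert x F)
  obtain c1 where c1: "c1 > 0" "\<forall>s\<in>F. P c1 s" using insert by blast
  obtain c2 where c2: "c2 > 0" "P c2 x" using insert by blast
  have "\<forall>s\<in>insert x F. P (min c1 c2) s"
  proof
    fix s assume "s \<in> insert x F"
    then show "P (min c1 c2) s"
    proof
      assume "s = x" then show ?thesis using insert.prems(2)[of x c2 "min c1 c2"] c1 c2 by auto
    next
      assume "s \<in> F" then show ?thesis using insert.prems(2)[of s c1 "min c1 c2"] c1 c2 by auto
    qed
  qed
  then show ?case using c1 c2 by (intro exI[of _ "min c1 c2"]) auto
qed

lemma sep_point:
  fixes S :: "complex set"
  assumes "compact S" "p \<notin> S"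
  shows "\<exists>c>0. \<forall>x\<in>S. c \<le> norm (x - p)"
proof -
  obtain c where "c > 0" "\<forall>x\<in>S. \<forall>y\<in>{p}. c \<le> dist x y"
    using separate_compact_closed[of S "{p}"] assms by auto
  then show ?thesis by (auto simp: dist_norm)
qed

context gasket begin

lemma compact_T: "compact (sim_map r d j ` Delta)"
  by (rule compact_continuous_image) (auto simp: sim_map_def intro!: continuous_intros compact_Delta)

lemma wm_Cons_img: "word_map r d (i#I) ` S = sim_map r d i ` (word_map r d I ` S)"
  by (simp only: wm_Cons image_comp)

lemma vtx_fix:
  assumes j: "j \<in> {1..N}" and a: "a < 3" and v: "vtx a \<in> sim_map r d j ` Delta"
  shows "sim_map r d j (vtx a) = vtx a"
proof -
  obtain z where z: "z \<in> Delta" "vtx a = sim_map r d j z" using v by auto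
  define p where "p = sim_map r d j (vtx a)"
  have pD: "p \<in> Delta" using Tsub[OF j] vtx_Delta[OF a] by (auto simp: p_def)
  have e: "bc a (vtx a) - bc a p = r j * (bc a z - 1)"
    using bc_sim[of a r d j z "vtx a"] z(2) bc_vtx[OF a a] by (simp add: p_def)
  have "bc a z \<le> 1" using bc_le1[OF z(1) a] .
  then have "r j * (bc a z - 1) \<le> 0" using rpos[OF j] by (simp add: mult_le_0_iff)
  moreover have "bc a p \<le> 1" using bc_le1[OF pD a] .
  ultimately have "bc a p = 1" using e bc_vtx[OF a a] by simp
  then have "norm (p - vtx a) \<le> 0" using bc_near[OF pD a] by simp
  then show ?thesis by (simp add: p_def)
qed

lemma lemV: "\<exists>c>0. \<forall>U a. set U \<subseteq> {1..N} \<longrightarrow> a < 3 \<longrightarrow> vtx a \<notin> word_map r d U ` K \<longrightarrow>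
   (\<forall>x\<in>word_map r d U ` K. c * rho r U \<le> norm (x - vtx a))"
proof -
  obtain e1 where e1: "e1 > 0" "\<forall>a\<in>{..<3}. vtx a \<notin> K \<longrightarrow> (\<forall>x\<in>K. e1 \<le> norm (x - vtx a))"
  proof -
    have "\<exists>c>0. \<forall>a\<in>{..<3::nat}. vtx a \<notin> K \<longrightarrow> (\<forall>x\<in>K. c \<le> norm (x - vtx a))"
    proof (rule finite_const)
      fix a show "\<exists>c>0. vtx a \<notin> K \<longrightarrow> (\<forall>x\<in>K. c \<le> norm (x - vtx a))"
        using sep_point[OF Kc, of "vtx a"] zero_less_one by (cases "vtx a \<in> K") blast+
    qed auto
    then show ?thesis using that by blast
  qed
  obtain e2 where e2: "e2 > 0" "\<forall>s\<in>{1..N} \<times> {..<3}. vtx (snd s) \<notin> sim_map r d (fst s) ` Delta \<longrightarrow>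
      (\<forall>x\<in>sim_map r d (fst s) ` Delta. e2 \<le> norm (x - vtx (snd s)))"
  proof -
    have "\<exists>c>0. \<forall>s\<in>{1..N} \<times> {..<3::nat}. vtx (snd s) \<notin> sim_map r d (fst s) ` Delta \<longrightarrow>
      (\<forall>x\<in>sim_map r d (fst s) ` Delta. c \<le> norm (x - vtx (snd s)))"
    proof (rule finite_const)
      fix s :: "nat \<times> nat"
      show "\<exists>c>0. vtx (snd s) \<notin> sim_map r d (fst s) ` Delta \<longrightarrow>
        (\<forall>x\<in>sim_map r d (fst s) ` Delta. c \<le> norm (x - vtx (snd s)))"
        using sep_point[OF compact_T, of "vtx (snd s)" "fst s"]
        zero_less_one by (cases "vtx (snd s) \<in> sim_map r d (fst s) ` Delta") blast+
    qed auto
    then show ?thesis using that by blast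
  qed
  define c where "c = min e1 e2"
  have c: "c > 0" "c \<le> e1" "c \<le> e2" using e1 e2 by (auto simp: c_def)
  have "\<forall>a. a < 3 \<longrightarrow> vtx a \<notin> word_map r d U ` K \<longrightarrow>
   (\<forall>x\<in>word_map r d U ` K. c * rho r U \<le> norm (x - vtx a))" if "set U \<subseteq> {1..N}" for U
    using that
  proof (induction U)
    case Nil
    show ?case
    proof (intro allI impI ballI)
      fix a x assume a: "a < 3" "vtx a \<notin> word_map r d [] ` K" "x \<in> word_map r d [] ` K"
      then have "e1 \<le> norm (x - vtx a)" using e1(2) by (auto simp: wm_Nil)
      then show "c * rho r [] \<le> norm (x - vtx a)" using c by simp
    qed
  next
    case (Cons j U)
    have j: "j \<in> {1..N}" and U: "set U \<subseteq> {1..N}" using Cons.prems by auto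
    show ?case
    proof (intro allI impI ballI)
      fix a x assume a: "a < 3" and nv: "vtx a \<notin> word_map r d (j # U) ` K"
        and x: "x \<in> word_map r d (j # U) ` K"
      obtain x' where x': "x' \<in> word_map r d U ` K" "x = sim_map r d j x'"
        using x by (auto simp: wm_Cons_img)
      have x'D: "x' \<in> Delta" using wm_K[OF U] x'(1) by blast
      have rh: "0 < rho r U" "rho r U \<le> 1" using rho_pos[OF U] by auto
      show "c * rho r (j # U) \<le> norm (x - vtx a)"
      proof (cases "vtx a \<in> sim_map r d j ` Delta")
        case False
        have "e2 \<le> norm (x - vtx a)" using e2(2) j a False x'D x'(2) by force
        moreover have "c * rho r (j # U) \<le> c" using rho_pos[of "j#U"] U j c(1)
          by (simp add: mult_le_cancel_left1)
        ultimately show ?thesis using c by linarith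
      next
        case True
        have fx: "sim_map r d j (vtx a) = vtx a" using vtx_fix[OF j a True] .
        have "vtx a \<notin> word_map r d U ` K"
        proof
          assume "vtx a \<in> word_map r d U ` K"
          then have "sim_map r d j (vtx a) \<in> word_map r d (j # U) ` K" by (auto simp: wm_Cons_img)
          then show False using nv fx by simp
        qed
        then have IH: "c * rho r U \<le> norm (x' - vtx a)" using Cons.IH U a x'(1) by blast
        have "norm (x - vtx a) = r j * norm (x' - vtx a)"
          using sim_norm[OF j, of x' "vtx a"] x'(2) fx by simp
        moreover have "r j * (c * rho r U) \<le> r j * norm (x' - vtx a)"
          using IH rpos[OF j] by simp
        ultimately show ?thesis by (simp add: algebra_simps)
      qed
    qed
  qed
  then show ?thesis using c(1) by blast
qed

end


definition gc :: complex where "gc = Complex (1/2) (sqrt 3 / 6)"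

lemma bc_gc: "a < 3 \<Longrightarrow> bc a gc = 1/3"
proof -
  have s: "sqrt 3 \<noteq> 0" by simp
  have "bc 1 gc = 1/3" "bc 2 gc = 1/3" "bc 0 gc = 1/3"
    using s by (simp_all add: bc_def gc_def field_simps)
  moreover assume "a < 3"
  then have "a = 0 \<or> a = 1 \<or> a = 2" by auto
  ultimately show ?thesis by auto
qed

lemma bc_comb: "bc c (of_real t * u + of_real (1 - t) * w) = t * bc c u + (1 - t) * bc c w"
  by (simp add: bc_def algebra_simps diff_divide_distrib add_divide_distrib)

context gasket begin

lemma pt_in_T:
  assumes k: "k \<in> {1..N}" and a: "a < 3" and m: "0 < m" "m \<le> r k"
  shows "\<exists>z. z \<in> Delta \<and> sim_map r d k z = sim_map r d k (vtx a) + of_real m * (gc - vtx a) \<and>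
     (\<forall>c<3. bc c z = (m / r k) / 3 + (1 - m / r k) * (if c = a then 1 else 0))"
proof -
  define t where "t = m / r k"
  have rk: "0 < r k" using rpos[OF k] .
  have t: "0 < t" "t \<le> 1" using m rk by (auto simp: t_def)
  define z where "z = of_real t * gc + of_real (1 - t) * vtx a"
  have bz: "\<forall>c<3. bc c z = t / 3 + (1 - t) * (if c = a then 1 else 0)"
  proof (intro allI impI)
    fix c :: nat assume c: "c < 3"
    have "bc c z = t * bc c gc + (1 - t) * bc c (vtx a)" unfolding z_def by (rule bc_comb)
    then show "bc c z = t / 3 + (1 - t) * (if c = a then 1 else 0)" using bc_gc[OF c] bc_vtx[OF c a] by simp
  qed
  have "z \<in> Delta" unfolding Delta_bc using bz t by auto
  moreover have "sim_map r d k z = sim_map r d k (vtx a) + of_real m * (gc - vtx a)"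
  proof -
    have "(of_real (r k) :: complex) * of_real t = of_real m"
    proof -
      have "r k * t = m" using rk by (simp add: t_def)
      then show ?thesis by (metis of_real_mult)
    qed
    then show ?thesis by (simp add: sim_map_def z_def algebra_simps)
  qed
  ultimately show ?thesis using bz unfolding t_def by blast
qed

lemma no_same_vertex:
  assumes i: "i \<in> {1..N}" and j: "j \<in> {1..N}" and ij: "i \<noteq> j" and a: "a < 3"
    and p: "sim_map r d i (vtx a) = sim_map r d j (vtx a)"
  shows False
proof -
  define m where "m = min (r i) (r j)"
  have m: "0 < m" "m \<le> r i" "m \<le> r j" using rpos[OF i] rpos[OF j] by (auto simp: m_def)
  define q where "q = sim_map r d i (vtx a) + of_real m * (gc - vtx a)"
  obtain zi where zi: "zi \<in> Delta" "sim_map r d i zi = q"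
     "\<forall>c<3. bc c zi = (m / r i) / 3 + (1 - m / r i) * (if c = a then 1 else 0)"
    using pt_in_T[OF i a m(1,2)] unfolding q_def by blast
  obtain zj where zj: "zj \<in> Delta" "sim_map r d j zj = q"
    using pt_in_T[OF j a m(1,3)] p unfolding q_def by auto
  have "q \<in> sim_map r d i ` Delta \<inter> sim_map r d j ` Delta"
    using zi zj by (metis IntI image_eqI)
  then have "q \<in> sim_map r d i ` tri_vertices" using Tint[OF i j ij] by blast
  then obtain c where c: "c < 3" "q = sim_map r d i (vtx c)" by (auto simp: tri_vertices_vtx)
  have "zi = vtx c" using sim_inj[OF i] zi(2) c(2) by (auto dest: injD)
  then have "bc c zi = 1" using bc_vtx[OF c(1) c(1)] by simp
  moreover have t: "0 < m / r i" "m / r i \<le> 1" using m rpos[OF i] by auto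
  ultimately show False using zi(3) c(1) by (cases "c = a") auto
qed

lemma cone_bound:
  assumes k: "k \<in> {1..N}" and a: "a < 3" and b: "b < 3" and ab: "a \<noteq> b" and x: "x \<in> Delta"
  shows "norm (sim_map r d k x - sim_map r d k (vtx a)) \<le>
     (bc b (sim_map r d k x) - bc a (sim_map r d k x)) - (bc b (sim_map r d k (vtx a)) - bc a (sim_map r d k (vtx a)))"
proof -
  have e: "(bc b (sim_map r d k x) - bc a (sim_map r d k x)) - (bc b (sim_map r d k (vtx a)) - bc a (sim_map r d k (vtx a)))
     = r k * (bc b x - bc a x + 1)"
    using bc_sim[of b r d k x "vtx a"] bc_sim[of a r d k x "vtx a"] bc_vtx[OF a a] bc_vtx[OF b a] ab
    by (simp add: algebra_simps)
  have "norm (x - vtx a) \<le> bc b x - bc a x + 1"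
    using bc_near[OF x a] x b by (auto simp: Delta_bc)
  then have "r k * norm (x - vtx a) \<le> r k * (bc b x - bc a x + 1)" using rpos[OF k] by simp
  then show ?thesis using e sim_norm[OF k] by simp
qed

lemma top: "\<exists>c>0. \<forall>i j I J. i \<in> {1..N} \<longrightarrow> j \<in> {1..N} \<longrightarrow> i \<noteq> j \<longrightarrow> set I \<subseteq> {1..N} \<longrightarrow> set J \<subseteq> {1..N}
   \<longrightarrow> word_map r d (i#I) ` K \<inter> word_map r d (j#J) ` K = {} \<longrightarrow>
   (\<forall>x\<in>word_map r d (i#I) ` K. \<forall>y\<in>word_map r d (j#J) ` K. c * min (rho r (i#I)) (rho r (j#J)) \<le> norm (x - y))"
proof -
  obtain c1 where c1: "c1 > 0" "\<forall>U a. set U \<subseteq> {1..N} \<longrightarrow> a < 3 \<longrightarrow> vtx a \<notin> word_map r d U ` K \<longrightarrow>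
   (\<forall>x\<in>word_map r d U ` K. c1 * rho r U \<le> norm (x - vtx a))" using lemV by blast
  obtain e0 where e0: "e0 > 0" "\<forall>s\<in>{1..N} \<times> {1..N}. sim_map r d (fst s) ` Delta \<inter> sim_map r d (snd s) ` Delta = {} \<longrightarrow>
      (\<forall>x\<in>sim_map r d (fst s) ` Delta. \<forall>y\<in>sim_map r d (snd s) ` Delta. e0 \<le> norm (x - y))"
  proof -
    have "\<exists>c>0. \<forall>s\<in>{1..N} \<times> {1..N}. sim_map r d (fst s) ` Delta \<inter> sim_map r d (snd s) ` Delta = {} \<longrightarrow>
      (\<forall>x\<in>sim_map r d (fst s) ` Delta. \<forall>y\<in>sim_map r d (snd s) ` Delta. c \<le> norm (x - y))"
    proof (rule finite_const)
      fix s :: "nat \<times> nat"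
      show "\<exists>c>0. sim_map r d (fst s) ` Delta \<inter> sim_map r d (snd s) ` Delta = {} \<longrightarrow>
      (\<forall>x\<in>sim_map r d (fst s) ` Delta. \<forall>y\<in>sim_map r d (snd s) ` Delta. c \<le> norm (x - y))"
        using separate_compact_closed[OF compact_T, of "sim_map r d (snd s) ` Delta" "fst s"]
          compact_T[of "snd s"] compact_imp_closed[of "sim_map r d (snd s) ` Delta"] zero_less_one
        unfolding dist_norm by blast
    qed force+
    then show ?thesis using that by blast
  qed
  define c where "c = min e0 (c1 / 4)"
  have c: "c > 0" "c \<le> e0" "c \<le> c1 / 4" using c1 e0 by (auto simp: c_def)
  have "\<forall>x\<in>word_map r d (i#I) ` K. \<forall>y\<in>word_map r d (j#J) ` K. c * min (rho r (i#I)) (rho r (j#J)) \<le> norm (x - y)"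
    if i: "i \<in> {1..N}" and j: "j \<in> {1..N}" and ij: "i \<noteq> j" and I: "set I \<subseteq> {1..N}" and J: "set J \<subseteq> {1..N}"
     and disj: "word_map r d (i#I) ` K \<inter> word_map r d (j#J) ` K = {}" for i j I J
  proof (intro ballI)
    fix x y assume x: "x \<in> word_map r d (i#I) ` K" and y: "y \<in> word_map r d (j#J) ` K"
    obtain x' where x': "x' \<in> word_map r d I ` K" "x = sim_map r d i x'" using x by (auto simp: wm_Cons_img)
    obtain y' where y': "y' \<in> word_map r d J ` K" "y = sim_map r d j y'" using y by (auto simp: wm_Cons_img)
    have x'D: "x' \<in> Delta" using wm_K[OF I] x'(1) by blast
    have y'D: "y' \<in> Delta" using wm_K[OF J] y'(1) by blast
    have rI: "0 < rho r (i#I)" "rho r (i#I) \<le> 1" using rho_pos[of "i#I"] i I by auto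
    have rJ: "0 < rho r (j#J)" "rho r (j#J) \<le> 1" using rho_pos[of "j#J"] j J by auto
    have mn: "min (rho r (i#I)) (rho r (j#J)) \<le> 1" using rI by simp
    show "c * min (rho r (i#I)) (rho r (j#J)) \<le> norm (x - y)"
    proof (cases "sim_map r d i ` Delta \<inter> sim_map r d j ` Delta = {}")
      case True
      have "e0 \<le> norm (x - y)" using e0(2) i j True x'D y'D x'(2) y'(2) by force
      moreover have "c * min (rho r (i#I)) (rho r (j#J)) \<le> c" using mn c(1) by (simp add: mult_le_cancel_left1)
      ultimately show ?thesis using c by linarith
    next
      case False
      then obtain p where "p \<in> sim_map r d i ` Delta \<inter> sim_map r d j ` Delta" by blast
      then have "p \<in> sim_map r d i ` tri_vertices \<inter> sim_map r d j ` tri_vertices" using Tint[OF i j ij] by blast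
      then obtain a b where a: "a < 3" "p = sim_map r d i (vtx a)" and b: "b < 3" "p = sim_map r d j (vtx b)"
        by (auto simp: tri_vertices_vtx)
      have ab: "a \<noteq> b" using no_same_vertex[OF i j ij a(1)] a b by auto
      have lx: "norm (x - p) \<le> (bc b x - bc a x) - (bc b p - bc a p)"
        using cone_bound[OF i a(1) b(1) ab x'D] a(2) x'(2) by simp
      have ly: "norm (y - p) \<le> (bc a y - bc b y) - (bc a p - bc b p)"
        using cone_bound[OF j b(1) a(1) ab[symmetric] y'D] b(2) y'(2) by simp
      have l1: "\<bar>bc a x - bc a y\<bar> \<le> 2 * norm (x - y)" "\<bar>bc b x - bc b y\<bar> \<le> 2 * norm (x - y)" by (rule bc_lip)+
      have main: "norm (x - p) + norm (y - p) \<le> 4 * norm (x - y)" using lx ly l1 by linarith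
      have "p \<notin> word_map r d (i#I) ` K \<or> p \<notin> word_map r d (j#J) ` K" using disj by blast
      then show ?thesis
      proof
        assume np: "p \<notin> word_map r d (i#I) ` K"
        have "vtx a \<notin> word_map r d I ` K"
        proof
          assume "vtx a \<in> word_map r d I ` K"
          then have "sim_map r d i (vtx a) \<in> word_map r d (i#I) ` K" by (auto simp: wm_Cons_img)
          then show False using np a(2) by simp
        qed
        then have "c1 * rho r I \<le> norm (x' - vtx a)" using c1(2) I a(1) x'(1) by blast
        then have "r i * (c1 * rho r I) \<le> r i * norm (x' - vtx a)" using rpos[OF i] by simp
        moreover have "norm (x - p) = r i * norm (x' - vtx a)" using sim_norm[OF i] x'(2) a(2) by simp
        ultimately have "c1 * rho r (i#I) \<le> norm (x - p)" by (simp add: algebra_simps)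
        then have "c1 * rho r (i#I) \<le> 4 * norm (x - y)" using main norm_ge_zero[of "y - p"] by linarith
        moreover have "c * min (rho r (i#I)) (rho r (j#J)) \<le> (c1/4) * rho r (i#I)"
          using c rI rJ by (intro mult_mono) auto
        ultimately show ?thesis by simp
      next
        assume np: "p \<notin> word_map r d (j#J) ` K"
        have "vtx b \<notin> word_map r d J ` K"
        proof
          assume "vtx b \<in> word_map r d J ` K"
          then have "sim_map r d j (vtx b) \<in> word_map r d (j#J) ` K" by (auto simp: wm_Cons_img)
          then show False using np b(2) by simp
        qed
        then have "c1 * rho r J \<le> norm (y' - vtx b)" using c1(2) J b(1) y'(1) by blast
        then have "r j * (c1 * rho r J) \<le> r j * norm (y' - vtx b)" using rpos[OF j] by simp
        moreover have "norm (y - p) = r j * norm (y' - vtx b)" using sim_norm[OF j] y'(2) b(2) by simp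
        ultimately have "c1 * rho r (j#J) \<le> norm (y - p)" by (simp add: algebra_simps)
        then have "c1 * rho r (j#J) \<le> 4 * norm (x - y)" using main norm_ge_zero[of "x - p"] by linarith
        moreover have "c * min (rho r (i#I)) (rho r (j#J)) \<le> (c1/4) * rho r (j#J)"
          using c rI rJ by (intro mult_mono) auto
        ultimately show ?thesis by simp
      qed
    qed
  qed
  then show ?thesis using c(1) by blast
qed

end


context gasket begin

lemma mainc: "\<exists>c>0. \<forall>I J. set I \<subseteq> {1..N} \<longrightarrow> set J \<subseteq> {1..N} \<longrightarrow> length I = length J \<longrightarrow>
   word_map r d I ` K \<inter> word_map r d J ` K = {} \<longrightarrow>
   (\<forall>x\<in>word_map r d I ` K. \<forall>y\<in>word_map r d J ` K. c * min (rho r I) (rho r J) \<le> norm (x - y))"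
proof -
  obtain c where c: "c > 0" "\<forall>i j I J. i \<in> {1..N} \<longrightarrow> j \<in> {1..N} \<longrightarrow> i \<noteq> j \<longrightarrow> set I \<subseteq> {1..N} \<longrightarrow> set J \<subseteq> {1..N}
   \<longrightarrow> word_map r d (i#I) ` K \<inter> word_map r d (j#J) ` K = {} \<longrightarrow>
   (\<forall>x\<in>word_map r d (i#I) ` K. \<forall>y\<in>word_map r d (j#J) ` K. c * min (rho r (i#I)) (rho r (j#J)) \<le> norm (x - y))"
    using top by blast
  have "\<forall>J. set I \<subseteq> {1..N} \<longrightarrow> set J \<subseteq> {1..N} \<longrightarrow> length I = length J \<longrightarrow>
   word_map r d I ` K \<inter> word_map r d J ` K = {} \<longrightarrow>
   (\<forall>x\<in>word_map r d I ` K. \<forall>y\<in>word_map r d J ` K. c * min (rho r I) (rho r J) \<le> norm (x - y))" for I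
  proof (induction I)
    case Nil
    show ?case using Kne by (auto simp: wm_Nil)
  next
    case (Cons i I)
    show ?case
    proof (intro allI impI)
      fix J assume I: "set (i#I) \<subseteq> {1..N}" and J: "set J \<subseteq> {1..N}" and len: "length (i#I) = length J"
        and disj: "word_map r d (i#I) ` K \<inter> word_map r d J ` K = {}"
      obtain j J' where J': "J = j # J'" using len by (cases J) auto
      have i: "i \<in> {1..N}" and I': "set I \<subseteq> {1..N}" using I by auto
      have j: "j \<in> {1..N}" and J'': "set J' \<subseteq> {1..N}" using J J' by auto
      show "\<forall>x\<in>word_map r d (i#I) ` K. \<forall>y\<in>word_map r d J ` K. c * min (rho r (i#I)) (rho r J) \<le> norm (x - y)"
      proof (cases "i = j")
        case False
        then show ?thesis using c(2) i j I' J'' disj unfolding J' by blast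
      next
        case True
        have disj': "word_map r d I ` K \<inter> word_map r d J' ` K = {}"
        proof -
          have "sim_map r d i ` (word_map r d I ` K) \<inter> sim_map r d i ` (word_map r d J' ` K) = {}"
            using disj True unfolding J' by (simp add: wm_Cons_img)
          then show ?thesis using sim_inj[OF i] by (simp add: image_Int[symmetric])
        qed
        have IH: "\<forall>x\<in>word_map r d I ` K. \<forall>y\<in>word_map r d J' ` K. c * min (rho r I) (rho r J') \<le> norm (x - y)"
          using Cons.IH I' J'' len disj' unfolding J' by simp
        show ?thesis
        proof (intro ballI)
          fix x y assume x: "x \<in> word_map r d (i#I) ` K" and y: "y \<in> word_map r d J ` K"
          obtain x' where x': "x' \<in> word_map r d I ` K" "x = sim_map r d i x'" using x by (auto simp: wm_Cons_img)
          obtain y' where y': "y' \<in> word_map r d J' ` K" "y = sim_map r d i y'" using y True unfolding J' by (auto simp: wm_Cons_img)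
          have "c * min (rho r I) (rho r J') \<le> norm (x' - y')"
            using IH x'(1) y'(1) by blast
          then have "r i * (c * min (rho r I) (rho r J')) \<le> r i * norm (x' - y')"
            using rpos[OF i] by simp
          moreover have "norm (x - y) = r i * norm (x' - y')" using sim_norm[OF i] x'(2) y'(2) by simp
          moreover have "r i * min (rho r I) (rho r J') = min (rho r (i#I)) (rho r J)"
            using rpos[OF i] True unfolding J' by (simp add: min_mult_distrib_left)
          ultimately show "c * min (rho r (i#I)) (rho r J) \<le> norm (x - y)" by (simp add: algebra_simps)
        qed
      qed
    qed
  qed
  then show ?thesis using c(1) by blast
qed

end

theorem lemma4p2:
  fixes N :: nat and r :: "nat \<Rightarrow> real" and d :: "nat \<Rightarrow> complex" and K :: "complex set"
  assumes "fractal_gasket N r d K"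
  shows "\<exists>C>0. \<forall>k\<ge>1. \<forall>I J. length I = k \<and> length J = k \<and>
            set I \<subseteq> {1..N} \<and> set J \<subseteq> {1..N} \<and>
            word_map r d I ` K \<inter> word_map r d J ` K = {} \<longrightarrow>
            setdist (word_map r d I ` K) (word_map r d J ` K)
              \<ge> C * min (diameter (word_map r d I ` K)) (diameter (word_map r d J ` K))"
proof -
  interpret gasket N r d K using assms by unfold_locales
  obtain c where c: "c > 0" "\<forall>I J. set I \<subseteq> {1..N} \<longrightarrow> set J \<subseteq> {1..N} \<longrightarrow> length I = length J \<longrightarrow>
   word_map r d I ` K \<inter> word_map r d J ` K = {} \<longrightarrow>
   (\<forall>x\<in>word_map r d I ` K. \<forall>y\<in>word_map r d J ` K. c * min (rho r I) (rho r J) \<le> norm (x - y))"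
    using mainc by blast
  define D where "D = diameter K"
  have D: "0 \<le> D" unfolding D_def using Kc compact_imp_bounded diameter_ge_0 by blast
  define C where "C = c / (D + 1)"
  have C: "C > 0" using c D by (simp add: C_def)
  have CD: "C * D \<le> c" using c D by (simp add: C_def field_simps)
  have "\<forall>k\<ge>1. \<forall>I J. length I = k \<and> length J = k \<and>
            set I \<subseteq> {1..N} \<and> set J \<subseteq> {1..N} \<and>
            word_map r d I ` K \<inter> word_map r d J ` K = {} \<longrightarrow>
            setdist (word_map r d I ` K) (word_map r d J ` K)
              \<ge> C * min (diameter (word_map r d I ` K)) (diameter (word_map r d J ` K))"
  proof (intro allI impI)
    fix k :: nat and I J
    assume h: "length I = k \<and> length J = k \<and> set I \<subseteq> {1..N} \<and> set J \<subseteq> {1..N} \<and>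
            word_map r d I ` K \<inter> word_map r d J ` K = {}"
    then have I: "set I \<subseteq> {1..N}" and J: "set J \<subseteq> {1..N}" and len: "length I = length J"
      and disj: "word_map r d I ` K \<inter> word_map r d J ` K = {}" by auto
    have rI: "0 < rho r I" using rho_pos[OF I] by simp
    have rJ: "0 < rho r J" using rho_pos[OF J] by simp
    have bnd: "C * min (diameter (word_map r d I ` K)) (diameter (word_map r d J ` K)) \<le> c * min (rho r I) (rho r J)"
    proof -
      have "min (diameter (word_map r d I ` K)) (diameter (word_map r d J ` K)) \<le> min (rho r I * D) (rho r J * D)"
        using diam_wm[OF I] diam_wm[OF J] by (simp add: D_def min.coboundedI1 min.coboundedI2)
      also have "\<dots> = D * min (rho r I) (rho r J)" using D by (simp add: min_mult_distrib_left mult.commute)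
      finally have "C * min (diameter (word_map r d I ` K)) (diameter (word_map r d J ` K)) \<le> C * (D * min (rho r I) (rho r J))"
        using C by simp
      also have "\<dots> = (C * D) * min (rho r I) (rho r J)" by simp
      also have "\<dots> \<le> c * min (rho r I) (rho r J)" using CD rI rJ by (intro mult_right_mono) auto
      finally show ?thesis .
    qed
    show "setdist (word_map r d I ` K) (word_map r d J ` K)
              \<ge> C * min (diameter (word_map r d I ` K)) (diameter (word_map r d J ` K))"
    proof (rule le_setdistI)
      show "word_map r d I ` K \<noteq> {}" "word_map r d J ` K \<noteq> {}" using Kne by auto
      fix x y assume "x \<in> word_map r d I ` K" "y \<in> word_map r d J ` K"
      then have "c * min (rho r I) (rho r J) \<le> norm (x - y)" using c(2) I J len disj by blast
      then show "C * min (diameter (word_map r d I ` K)) (diameter (word_map r d J ` K)) \<le> dist x y"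
        using bnd by (simp add: dist_norm)
    qed
  qed
  then show ?thesis using C by blast
qed


end
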